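(* Let $F$ be a recurrent set, $X\subset F$ a finite $F$-maximal bifix code and $w\in F$ a nonempty word. Let $G=\{u\in A^*\mid uw\in X\}$ and $D=\{u\in A^*\mid wu\in X\}$. If $G\ne\emptyset$, $D\neq\emptyset$ and $Gw\cap wD=\emptyset$, then the set $Y=(X\cup\{w\}\cup(GwD\cap F))\setminus(Gw\cup wD)$ is a finite $F$-maximal bifix code with the same $F$-degree as $X$.
   Context: $A$ is a finite alphabet. $F\subset A^*$ is recurrent if it is nonempty, closed under factors, and for all $u,v\in F$ there is $t\in F$ with $utv\in F$. A bifix code is a set of nonempty words none of which is a proper prefix or proper suffix of another; $X\subset F$ is $F$-maximal bifix if not properly contained in any bifix code contained in $F$. A parse of $z$ with respect to $X$ is a triple $(v,x,u)$ with $z=vxu$, $v$ having no suffix in $X$, $x\in X^*$, $u$ having no prefix in $X$; $\delta_X(z)$ is their number and the $F$-degree is $d_F(X)=\max_{z\in F}\delta_X(z)$. *)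

theory Defs
  imports Main "HOL-Library.Sublist" "HOL-Library.Extended_Nat"
begin

definition factor_closed :: "'a list set \<Rightarrow> bool" where
  "factor_closed F \<longleftrightarrow> (\<forall>z\<in>F. \<forall>p u s. z = p @ u @ s \<longrightarrow> u \<in> F)"

definition recurrent :: "'a set \<Rightarrow> 'a list set \<Rightarrow> bool" where
  "recurrent A F \<longleftrightarrow> F \<noteq> {} \<and> F \<subseteq> lists A \<and> factor_closed F \<and>
     (\<forall>u\<in>F. \<forall>v\<in>F. \<exists>t\<in>F. u @ t @ v \<in> F)"

definition bifix_code :: "'a list set \<Rightarrow> bool" where
  "bifix_code X \<longleftrightarrow> [] \<notin> X \<and>
     (\<forall>x\<in>X. \<forall>y\<in>X. strict_prefix x y \<longrightarrow> False) \<and>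
     (\<forall>x\<in>X. \<forall>y\<in>X. strict_suffix x y \<longrightarrow> False)"

definition F_maximal_bifix :: "'a list set \<Rightarrow> 'a list set \<Rightarrow> bool" where
  "F_maximal_bifix F X \<longleftrightarrow> bifix_code X \<and> X \<subseteq> F \<and>
     (\<forall>Y. bifix_code Y \<and> Y \<subseteq> F \<and> X \<subseteq> Y \<longrightarrow> Y = X)"

definition star :: "'a list set \<Rightarrow> 'a list set" where
  "star X = {concat xs | xs. xs \<in> lists X}"

definition parses :: "'a list set \<Rightarrow> 'a list \<Rightarrow> ('a list \<times> 'a list \<times> 'a list) set" where
  "parses X z = {(v, x, u). z = v @ x @ u \<and> (\<forall>s. suffix s v \<longrightarrow> s \<notin> X) \<and>
      x \<in> star X \<and> (\<forall>p. prefix p u \<longrightarrow> p \<notin> X)}"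

definition delta :: "'a list set \<Rightarrow> 'a list \<Rightarrow> nat" where
  "delta X z = card (parses X z)"

text \<open>F-degree, taken in extended naturals (supremum; equals the maximum when attained).\<close>
definition F_degree :: "'a list set \<Rightarrow> 'a list set \<Rightarrow> enat" where
  "F_degree F X = (SUP z\<in>F. enat (delta X z))"

end

theory Submission
  imports Defs
begin


definition freeP :: "'a list set \<Rightarrow> 'a list \<Rightarrow> 'a list set" where
  "freeP X z = {p. prefix p z \<and> (\<forall>s. suffix s p \<longrightarrow> s \<notin> X)}"
definition freeS :: "'a list set \<Rightarrow> 'a list \<Rightarrow> 'a list set" where
  "freeS X z = {s. suffix s z \<and> (\<forall>p. prefix p s \<longrightarrow> p \<notin> X)}"

lemma star_Nil: "[] \<in> star X"
  unfolding star_def by (rule CollectI, rule exI[of _ "[]"]) simp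

lemma star_Cons: "x \<in> X \<Longrightarrow> y \<in> star X \<Longrightarrow> x @ y \<in> star X"
proof -
  assume "x \<in> X" "y \<in> star X"
  then obtain xs where "xs \<in> lists X" "y = concat xs" unfolding star_def by auto
  then show ?thesis unfolding star_def using \<open>x \<in> X\<close> by (auto intro!: exI[of _ "x # xs"])
qed

lemma star_snoc: "y \<in> star X \<Longrightarrow> x \<in> X \<Longrightarrow> y @ x \<in> star X"
proof -
  assume "x \<in> X" "y \<in> star X"
  then obtain xs where "xs \<in> lists X" "y = concat xs" unfolding star_def by auto
  then show ?thesis unfolding star_def using \<open>x \<in> X\<close> by (auto intro!: exI[of _ "xs @ [x]"])
qed

lemma fact_exist_pre:
  assumes "[] \<notin> X"
  shows "\<exists>x u. r = x @ u \<and> x \<in> star X \<and> (\<forall>p. prefix p u \<longrightarrow> p \<notin> X)"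
proof (induction "length r" arbitrary: r rule: less_induct)
  case less
  show ?case
  proof (cases "\<exists>p. prefix p r \<and> p \<in> X")
    case True
    then obtain p r' where p: "p \<in> X" "r = p @ r'" by (auto simp: prefix_def)
    with assms have "p \<noteq> []" by auto
    with p have "length r' < length r" by simp
    from less(1)[OF this] obtain x u where "r' = x @ u" "x \<in> star X" "\<forall>p. prefix p u \<longrightarrow> p \<notin> X" by blast
    then show ?thesis using p star_Cons[of p X x] by (intro exI[of _ "p @ x"] exI[of _ u]) auto
  next
    case False
    then show ?thesis by (intro exI[of _ "[]"] exI[of _ r]) (auto simp: star_Nil)
  qed
qed

lemma fact_exist_suf:
  assumes "[] \<notin> X"
  shows "\<exists>v x. r = v @ x \<and> x \<in> star X \<and> (\<forall>s. suffix s v \<longrightarrow> s \<notin> X)"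
proof (induction "length r" arbitrary: r rule: less_induct)
  case less
  show ?case
  proof (cases "\<exists>p. suffix p r \<and> p \<in> X")
    case True
    then obtain p r' where p: "p \<in> X" "r = r' @ p" by (auto simp: suffix_def)
    with assms have "p \<noteq> []" by auto
    with p have "length r' < length r" by simp
    from less(1)[OF this] obtain x v where "r' = v @ x" "x \<in> star X" "\<forall>s. suffix s v \<longrightarrow> s \<notin> X" by blast
    then show ?thesis using p star_snoc[of x X p] by (intro exI[of _ v] exI[of _ "x @ p"]) auto
  next
    case False
    then show ?thesis by (intro exI[of _ r] exI[of _ "[]"]) (auto simp: star_Nil)
  qed
qed

lemma fact_uniq_pre:
  assumes pc: "\<forall>x\<in>X. \<forall>y\<in>X. \<not> strict_prefix x y"
  shows "xs1 \<in> lists X \<Longrightarrow> xs2 \<in> lists X \<Longrightarrow> concat xs1 @ u1 = concat xs2 @ u2 \<Longrightarrow>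
    (\<forall>p. prefix p u1 \<longrightarrow> p \<notin> X) \<Longrightarrow> (\<forall>p. prefix p u2 \<longrightarrow> p \<notin> X) \<Longrightarrow> concat xs1 = concat xs2"
proof (induction xs1 arbitrary: xs2 u1 u2)
  case Nil
  then show ?case
  proof (cases xs2)
    case (Cons b bs)
    with Nil have "prefix b u1" "b \<in> X" by auto
    with Nil show ?thesis by blast
  qed simp
next
  case (Cons a as)
  show ?case
  proof (cases "xs2 = []")
    case True
    with Cons.prems have "prefix a u2" "a \<in> X" by auto
    with Cons.prems show ?thesis by blast
  next
    case False
    then obtain b bs where Cons2: "xs2 = b # bs" by (cases xs2) auto
    have L: "a @ concat as @ u1 = b @ concat bs @ u2" using Cons.prems(3) Cons2 by simp
    have "prefix a (a @ concat as @ u1)" by simp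
    moreover have "prefix b (a @ concat as @ u1)" by (simp add: L)
    ultimately have "prefix a b \<or> prefix b a" using prefix_same_cases by blast
    moreover have "a \<in> X" "b \<in> X" using Cons.prems Cons2 by auto
    ultimately have ab: "a = b" using pc by (auto simp: strict_prefix_def)
    have "concat as @ u1 = concat bs @ u2" using Cons.prems(3) Cons2 ab by simp
    from Cons.IH[OF _ _ this] Cons.prems Cons2 ab show ?thesis by auto
  qed
qed

lemma fact_uniq_suf:
  assumes sc: "\<forall>x\<in>X. \<forall>y\<in>X. \<not> strict_suffix x y"
  shows "xs1 \<in> lists X \<Longrightarrow> xs2 \<in> lists X \<Longrightarrow> v1 @ concat xs1 = v2 @ concat xs2 \<Longrightarrow>
    (\<forall>s. suffix s v1 \<longrightarrow> s \<notin> X) \<Longrightarrow> (\<forall>s. suffix s v2 \<longrightarrow> s \<notin> X) \<Longrightarrow> concat xs1 = concat xs2"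
proof (induction xs1 arbitrary: xs2 v1 v2 rule: rev_induct)
  case Nil
  then show ?case
  proof (cases xs2 rule: rev_exhaust)
    case (snoc bs b)
    with Nil have "suffix b v1" "b \<in> X" by (auto simp: suffix_def)
    with Nil show ?thesis by blast
  qed simp
next
  case (snoc a as)
  show ?case
  proof (cases "xs2 = []")
    case True
    with snoc.prems have "suffix a v2" "a \<in> X" by (auto simp: suffix_def)
    with snoc.prems show ?thesis by blast
  next
    case False
    then obtain b bs where snoc2: "xs2 = bs @ [b]" by (cases xs2 rule: rev_exhaust) auto
    have L: "v1 @ concat as @ a = v2 @ concat bs @ b" using snoc.prems(3) snoc2 by simp
    have "suffix a (v1 @ concat as @ a)" by (simp add: suffix_def)
    moreover have "suffix b (v1 @ concat as @ a)" by (simp add: L suffix_def)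
    ultimately have "suffix a b \<or> suffix b a" using suffix_same_cases by blast
    moreover have "a \<in> X" "b \<in> X" using snoc.prems snoc2 by auto
    ultimately have ab: "a = b" using sc by (auto simp: strict_suffix_def)
    have "v1 @ concat as = v2 @ concat bs" using snoc.prems(3) snoc2 ab by simp
    from snoc.IH[OF _ _ this] snoc.prems snoc2 ab show ?thesis by auto
  qed
qed

lemma star_lists: "x \<in> star X \<Longrightarrow> \<exists>xs. xs \<in> lists X \<and> x = concat xs"
  unfolding star_def by auto

lemma delta_pre:
  assumes pc: "\<forall>x\<in>X. \<forall>y\<in>X. \<not> strict_prefix x y" and ne: "[] \<notin> X"
  shows "delta X z = card (freeP X z)"
proof -
  have "bij_betw (\<lambda>(v,x,u). v) (parses X z) (freeP X z)"
    unfolding bij_betw_def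
  proof
    show "inj_on (\<lambda>(v,x,u). v) (parses X z)"
    proof (rule inj_onI)
      fix q1 q2 assume q: "q1 \<in> parses X z" "q2 \<in> parses X z" "(\<lambda>(v,x,u). v) q1 = (\<lambda>(v,x,u). v) q2"
      obtain v x1 u1 where q1: "q1 = (v, x1, u1)" by (cases q1) auto
      obtain v' x2 u2 where q2: "q2 = (v', x2, u2)" by (cases q2) auto
      have a: "(v, x1, u1) \<in> parses X z" "(v', x2, u2) \<in> parses X z" and "v = v'"
        using q q1 q2 by auto
      then have e: "x1 @ u1 = x2 @ u2" by (auto simp: parses_def)
      from a obtain xs1 xs2 where "xs1 \<in> lists X" "x1 = concat xs1" "xs2 \<in> lists X" "x2 = concat xs2"
        by (auto simp: parses_def dest!: star_lists)
      with fact_uniq_pre[OF pc, of xs1 xs2 u1 u2] e a have "x1 = x2" by (auto simp: parses_def)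
      with e \<open>v = v'\<close> q1 q2 show "q1 = q2" by simp
    qed
  next
    show "(\<lambda>(v,x,u). v) ` parses X z = freeP X z"
    proof
      show "(\<lambda>(v,x,u). v) ` parses X z \<subseteq> freeP X z"
        by (auto simp: parses_def freeP_def)
    next
      show "freeP X z \<subseteq> (\<lambda>(v,x,u). v) ` parses X z"
      proof
        fix p assume p: "p \<in> freeP X z"
        then obtain r where r: "z = p @ r" by (auto simp: freeP_def prefix_def)
        from fact_exist_pre[OF ne, of r] obtain x u where
          "r = x @ u" "x \<in> star X" "\<forall>p. prefix p u \<longrightarrow> p \<notin> X" by blast
        with p r have "(p, x, u) \<in> parses X z" by (auto simp: parses_def freeP_def)
        then show "p \<in> (\<lambda>(v,x,u). v) ` parses X z" by force
      qed
    qed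
  qed
  then show ?thesis unfolding delta_def by (rule bij_betw_same_card)
qed

lemma delta_suf:
  assumes sc: "\<forall>x\<in>X. \<forall>y\<in>X. \<not> strict_suffix x y" and ne: "[] \<notin> X"
  shows "delta X z = card (freeS X z)"
proof -
  have "bij_betw (\<lambda>(v,x,u). u) (parses X z) (freeS X z)"
    unfolding bij_betw_def
  proof
    show "inj_on (\<lambda>(v,x,u). u) (parses X z)"
    proof (rule inj_onI)
      fix q1 q2 assume q: "q1 \<in> parses X z" "q2 \<in> parses X z" "(\<lambda>(v,x,u). u) q1 = (\<lambda>(v,x,u). u) q2"
      obtain v1 x1 u where q1: "q1 = (v1, x1, u)" by (cases q1) auto
      obtain v2 x2 u' where q2: "q2 = (v2, x2, u')" by (cases q2) auto
      have a: "(v1, x1, u) \<in> parses X z" "(v2, x2, u') \<in> parses X z" and "u = u'"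
        using q q1 q2 by auto
      then have e: "v1 @ x1 = v2 @ x2" by (auto simp: parses_def)
      from a obtain xs1 xs2 where "xs1 \<in> lists X" "x1 = concat xs1" "xs2 \<in> lists X" "x2 = concat xs2"
        by (auto simp: parses_def dest!: star_lists)
      with fact_uniq_suf[OF sc, of xs1 xs2 v1 v2] e a have "x1 = x2" by (auto simp: parses_def)
      with e \<open>u = u'\<close> q1 q2 show "q1 = q2" by simp
    qed
  next
    show "(\<lambda>(v,x,u). u) ` parses X z = freeS X z"
    proof
      show "(\<lambda>(v,x,u). u) ` parses X z \<subseteq> freeS X z"
        by (auto simp: parses_def freeS_def suffix_def)
    next
      show "freeS X z \<subseteq> (\<lambda>(v,x,u). u) ` parses X z"
      proof
        fix s assume s: "s \<in> freeS X z"
        then obtain r where r: "z = r @ s" by (auto simp: freeS_def suffix_def)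
        from fact_exist_suf[OF ne, of r] obtain v x where
          "r = v @ x" "x \<in> star X" "\<forall>s. suffix s v \<longrightarrow> s \<notin> X" by blast
        with s r have "(v, x, s) \<in> parses X z" by (auto simp: parses_def freeS_def)
        then show "s \<in> (\<lambda>(v,x,u). u) ` parses X z" by force
      qed
    qed
  qed
  then show ?thesis unfolding delta_def by (rule bij_betw_same_card)
qed

lemma finite_freeP: "finite (freeP X z)"
  by (rule finite_subset[of _ "set (prefixes z)"]) (auto simp: freeP_def)
lemma finite_freeS: "finite (freeS X z)"
  by (rule finite_subset[of _ "set (suffixes z)"]) (auto simp: freeS_def)

lemma bifix_pc: "bifix_code X \<Longrightarrow> \<forall>x\<in>X. \<forall>y\<in>X. \<not> strict_prefix x y"
  unfolding bifix_code_def by blast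
lemma bifix_sc: "bifix_code X \<Longrightarrow> \<forall>x\<in>X. \<forall>y\<in>X. \<not> strict_suffix x y"
  unfolding bifix_code_def by blast
lemma bifix_ne: "bifix_code X \<Longrightarrow> [] \<notin> X"
  unfolding bifix_code_def by blast

lemma sat_right:
  assumes "bifix_code X" "delta X (z @ u) \<le> delta X z" "prefix p (z @ u)" "length p > length z"
  shows "\<exists>s. suffix s p \<and> s \<in> X"
proof (rule ccontr)
  assume n: "\<not> ?thesis"
  have sub: "freeP X z \<subseteq> freeP X (z @ u)" by (auto simp: freeP_def prefix_def)
  have "card (freeP X (z @ u)) \<le> card (freeP X z)"
    using assms(2) delta_pre[OF bifix_pc[OF assms(1)] bifix_ne[OF assms(1)]] by simp
  then have "freeP X z = freeP X (z @ u)" using sub finite_freeP by (metis card_seteq)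
  moreover have "p \<in> freeP X (z @ u)" using n assms(3) by (auto simp: freeP_def)
  ultimately have "prefix p z" by (auto simp: freeP_def)
  then show False using assms(4) by (auto dest: prefix_length_le)
qed

lemma sat_left:
  assumes "bifix_code X" "delta X (u @ z) \<le> delta X z" "suffix s (u @ z)" "length s > length z"
  shows "\<exists>p. prefix p s \<and> p \<in> X"
proof (rule ccontr)
  assume n: "\<not> ?thesis"
  have sub: "freeS X z \<subseteq> freeS X (u @ z)" by (auto simp: freeS_def suffix_def)
  have "card (freeS X (u @ z)) \<le> card (freeS X z)"
    using assms(2) delta_suf[OF bifix_sc[OF assms(1)] bifix_ne[OF assms(1)]] by simp
  then have "freeS X z = freeS X (u @ z)" using sub finite_freeS by (metis card_seteq)
  moreover have "s \<in> freeS X (u @ z)" using n assms(3) by (auto simp: freeS_def)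
  ultimately have "suffix s z" by (auto simp: freeS_def)
  then show False using assms(4) by (auto dest: suffix_length_le)
qed

lemma card_short_suffixes: "card {s. suffix s z \<and> length s < n} \<le> n"
proof -
  have "inj_on length {s. suffix s z \<and> length s < n}"
  proof (rule inj_onI)
    fix s1 s2 assume "s1 \<in> {s. suffix s z \<and> length s < n}" "s2 \<in> {s. suffix s z \<and> length s < n}"
      "length s1 = length s2"
    then show "s1 = s2" using suffix_same_cases[of s1 z s2]
      by (auto simp: suffix_def)
  qed
  then have "card {s. suffix s z \<and> length s < n} \<le> card {..<n}"
    by (rule card_inj_on_le) auto
  then show ?thesis by simp
qed

lemma card_short_prefixes: "card {s. prefix s z \<and> length s < n} \<le> n"
proof -
  have "inj_on length {s. prefix s z \<and> length s < n}"
  proof (rule inj_onI)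
    fix s1 s2 assume "s1 \<in> {s. prefix s z \<and> length s < n}" "s2 \<in> {s. prefix s z \<and> length s < n}"
      "length s1 = length s2"
    then show "s1 = s2" using prefix_same_cases[of s1 z s2]
      by (auto simp: prefix_def)
  qed
  then have "card {s. prefix s z \<and> length s < n} \<le> card {..<n}"
    by (rule card_inj_on_le) auto
  then show ?thesis by simp
qed

lemma recurrent_fc: "recurrent A F \<Longrightarrow> z \<in> F \<Longrightarrow> z = p @ u @ s \<Longrightarrow> u \<in> F"
  unfolding recurrent_def factor_closed_def by blast

lemma bounded_degree:
  assumes rec: "recurrent A F" and fin: "finite X" and mx: "F_maximal_bifix F X"
  shows "\<exists>N. \<forall>z\<in>F. delta X z \<le> N"
proof -
  have bf: "bifix_code X" and XF: "X \<subseteq> F" using mx by (auto simp: F_maximal_bifix_def)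
  define n where "n = Suc (Max (insert 0 (length ` X)))"
  have nx: "length x < n" if "x \<in> X" for x
    using that fin unfolding n_def by (simp add: le_imp_less_Suc)
  have "(\<forall>u\<in>F. length u \<ge> n \<longrightarrow> (\<exists>x\<in>X. prefix x u)) \<or> (\<forall>v\<in>F. length v \<ge> n \<longrightarrow> (\<exists>x\<in>X. suffix x v))"
  proof (rule ccontr)
    assume "\<not> ?thesis"
    then obtain u v where u: "u \<in> F" "length u \<ge> n" "\<forall>x\<in>X. \<not> prefix x u"
      and v: "v \<in> F" "length v \<ge> n" "\<forall>x\<in>X. \<not> suffix x v" by blast
    from rec u v obtain t where t: "t \<in> F" "u @ t @ v \<in> F" unfolding recurrent_def by blast
    let ?y = "u @ t @ v"
    have np: "\<not> prefix x ?y" if "x \<in> X" for x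
    proof
      assume "prefix x ?y"
      moreover have "length x \<le> length u" using nx[OF that] u(2) by simp
      moreover have "prefix u ?y" by simp
      ultimately show False using prefix_length_prefix[of x ?y u] u(3) that by blast
    qed
    have ns: "\<not> suffix x ?y" if "x \<in> X" for x
    proof
      assume "suffix x ?y"
      moreover have "length x \<le> length v" using nx[OF that] v(2) by simp
      moreover have "suffix v ?y" by (simp add: suffix_def)
      ultimately show False using suffix_length_suffix[of x ?y v] v(3) that by blast
    qed
    have yX: "?y \<notin> X" using np by auto
    have ly: "length ?y \<ge> n" using u(2) by simp
    have "n \<ge> 1" unfolding n_def by simp
    have "bifix_code (insert ?y X)"
      unfolding bifix_code_def
    proof (intro conjI ballI impI)
      have "?y \<noteq> []" using ly \<open>n \<ge> 1\<close> by (metis le_zero_eq list.size(3) not_one_le_zero)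
      then show "[] \<notin> insert ?y X" using bifix_ne[OF bf] by simp
    next
      fix x y assume "x \<in> insert ?y X" "y \<in> insert ?y X" "strict_prefix x y"
      then consider "x \<in> X" "y \<in> X" | "x = ?y" "y \<in> X" | "x \<in> X" "y = ?y" | "x = ?y" "y = ?y"
        by blast
      then show False
      proof cases
        case 1 then show ?thesis using bifix_pc[OF bf] \<open>strict_prefix x y\<close> by blast
      next
        case 2
        then have "length x < length y" using \<open>strict_prefix x y\<close> prefix_length_less by blast
        then show ?thesis using nx[OF 2(2)] ly 2(1) by simp
      next
        case 3 then show ?thesis using np \<open>strict_prefix x y\<close> by (auto simp: strict_prefix_def)
      next
        case 4 then show ?thesis using \<open>strict_prefix x y\<close> by simp
      qed
    next
      fix x y assume "x \<in> insert ?y X" "y \<in> insert ?y X" "strict_suffix x y"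
      then consider "x \<in> X" "y \<in> X" | "x = ?y" "y \<in> X" | "x \<in> X" "y = ?y" | "x = ?y" "y = ?y"
        by blast
      then show False
      proof cases
        case 1 then show ?thesis using bifix_sc[OF bf] \<open>strict_suffix x y\<close> by blast
      next
        case 2
        then have "length x < length y" using \<open>strict_suffix x y\<close> suffix_length_less by blast
        then show ?thesis using nx[OF 2(2)] ly 2(1) by simp
      next
        case 3 then show ?thesis using ns \<open>strict_suffix x y\<close> by (auto simp: strict_suffix_def)
      next
        case 4 then show ?thesis using \<open>strict_suffix x y\<close> by simp
      qed
    qed
    moreover have "insert ?y X \<subseteq> F" using XF t by auto
    ultimately have "insert ?y X = X" using mx unfolding F_maximal_bifix_def by blast
    with yX show False by blast
  qed
  then show ?thesis
  proof
    assume H: "\<forall>u\<in>F. length u \<ge> n \<longrightarrow> (\<exists>x\<in>X. prefix x u)"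
    show ?thesis
    proof (intro exI ballI)
      fix z assume z: "z \<in> F"
      have "freeS X z \<subseteq> {s. suffix s z \<and> length s < n}"
      proof
        fix s assume s: "s \<in> freeS X z"
        then obtain zs where "z = zs @ s @ []" by (auto simp: freeS_def suffix_def)
        then have "s \<in> F" using recurrent_fc[OF rec z] by blast
        with s H show "s \<in> {s. suffix s z \<and> length s < n}"
          by (force simp: freeS_def)
      qed
      moreover have "finite {s. suffix s z \<and> length s < n}"
        by (rule finite_subset[of _ "set (suffixes z)"]) auto
      ultimately have "card (freeS X z) \<le> card {s. suffix s z \<and> length s < n}"
        by (rule card_mono[rotated])
      then have "card (freeS X z) \<le> n"
        using card_short_suffixes[of z n] by linarith
      then show "delta X z \<le> n" using delta_suf[OF bifix_sc[OF bf] bifix_ne[OF bf]] by simp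
    qed
  next
    assume H: "\<forall>v\<in>F. length v \<ge> n \<longrightarrow> (\<exists>x\<in>X. suffix x v)"
    show ?thesis
    proof (intro exI ballI)
      fix z assume z: "z \<in> F"
      have "freeP X z \<subseteq> {s. prefix s z \<and> length s < n}"
      proof
        fix s assume s: "s \<in> freeP X z"
        then obtain zs where "z = [] @ s @ zs" by (auto simp: freeP_def prefix_def)
        then have "s \<in> F" using recurrent_fc[OF rec z] by blast
        with s H show "s \<in> {s. prefix s z \<and> length s < n}"
          by (force simp: freeP_def)
      qed
      moreover have "finite {s. prefix s z \<and> length s < n}"
        by (rule finite_subset[of _ "set (prefixes z)"]) auto
      ultimately have "card (freeP X z) \<le> card {s. prefix s z \<and> length s < n}"
        by (rule card_mono[rotated])
      then have "card (freeP X z) \<le> n"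
        using card_short_prefixes[of z n] by linarith
      then show "delta X z \<le> n" using delta_pre[OF bifix_pc[OF bf] bifix_ne[OF bf]] by simp
    qed
  qed
qed

lemma max_delta:
  assumes "F \<noteq> {}" "\<forall>z\<in>F. delta Z z \<le> N"
  shows "\<exists>z0\<in>F. \<forall>z\<in>F. delta Z z \<le> delta Z z0"
proof -
  have fin: "finite (delta Z ` F)" by (rule finite_subset[of _ "{..N}"]) (use assms in auto)
  have "Max (delta Z ` F) \<in> delta Z ` F" using fin assms(1) by (intro Max_in) auto
  then obtain z0 where "z0 \<in> F" "delta Z z0 = Max (delta Z ` F)" by auto
  then show ?thesis using fin by (intro bexI[of _ z0]) auto
qed

lemma max_from_bounded:
  assumes rec: "recurrent A F" and bf: "bifix_code Z" and ZF: "Z \<subseteq> F"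
    and bd: "\<forall>z\<in>F. delta Z z \<le> N"
  shows "F_maximal_bifix F Z"
  unfolding F_maximal_bifix_def
proof (intro conjI allI impI bf ZF)
  fix Y' assume H: "bifix_code Y' \<and> Y' \<subseteq> F \<and> Z \<subseteq> Y'"
  have Fne: "F \<noteq> {}" using rec by (simp add: recurrent_def)
  obtain z0 where z0: "z0 \<in> F" "\<forall>z\<in>F. delta Z z \<le> delta Z z0" using max_delta[OF Fne bd] by blast
  have "Y' \<subseteq> Z"
  proof
    fix y assume y: "y \<in> Y'"
    then have yF: "y \<in> F" using H by blast
    have yne: "y \<noteq> []" using y H bifix_ne by blast
    from rec z0(1) yF obtain t where t: "z0 @ t @ y \<in> F" unfolding recurrent_def by blast
    have "delta Z (z0 @ (t @ y)) \<le> delta Z z0" using z0(2) t by simp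
    from sat_right[OF bf this, of "z0 @ t @ y"] yne obtain s where s: "suffix s (z0 @ t @ y)" "s \<in> Z"
      by auto
    have "suffix y (z0 @ t @ y)" by (simp add: suffix_def)
    with s have "suffix s y \<or> suffix y s" using suffix_same_cases by blast
    moreover have "s \<in> Y'" using s H by blast
    ultimately have "s = y" using bifix_sc[of Y'] H y by (auto simp: strict_suffix_def)
    with s show "y \<in> Z" by simp
  qed
  with H show "Y' = Z" by blast
qed

lemma card_diff_le:
  assumes "finite A" "finite B" "card (A - B) \<le> card (B - A)"
  shows "card A \<le> card B"
proof -
  have "card (A - B) = card A - card (A \<inter> B)" using assms by (simp add: card_Diff_subset_Int)
  moreover have "card (B - A) = card B - card (A \<inter> B)" using assms
    by (simp add: card_Diff_subset_Int Int_commute)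
  moreover have "card (A \<inter> B) \<le> card A" "card (A \<inter> B) \<le> card B"
    using assms by (auto intro: card_mono)
  ultimately show ?thesis using assms(3) by linarith
qed

lemma pc_eq: "\<forall>x\<in>X. \<forall>y\<in>X. \<not> strict_prefix x y \<Longrightarrow> a \<in> X \<Longrightarrow> b \<in> X \<Longrightarrow> prefix a c \<Longrightarrow> prefix b c \<Longrightarrow> a = b"
  using prefix_same_cases[of a c b] by (auto simp: strict_prefix_def)
lemma sc_eq: "\<forall>x\<in>X. \<forall>y\<in>X. \<not> strict_suffix x y \<Longrightarrow> a \<in> X \<Longrightarrow> b \<in> X \<Longrightarrow> suffix a c \<Longrightarrow> suffix b c \<Longrightarrow> a = b"
  using suffix_same_cases[of a c b] by (auto simp: strict_suffix_def)



theorem mainTheorem11: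
  fixes A :: "'a set" and F X :: "'a list set" and w :: "'a list"
  assumes "finite A"
    and "recurrent A F"
    and "finite X" and "F_maximal_bifix F X"
    and "w \<in> F" and "w \<noteq> []"
  defines "G \<equiv> {u \<in> lists A. u @ w \<in> X}"
    and "D \<equiv> {u \<in> lists A. w @ u \<in> X}"
  assumes "G \<noteq> {}" and "D \<noteq> {}"
    and "(\<lambda>g. g @ w) ` G \<inter> (\<lambda>d. w @ d) ` D = {}"
  shows "finite ((X \<union> {w} \<union> ({g @ w @ d | g d. g \<in> G \<and> d \<in> D} \<inter> F))
                   - ((\<lambda>g. g @ w) ` G \<union> (\<lambda>d. w @ d) ` D))
       \<and> F_maximal_bifix F ((X \<union> {w} \<union> ({g @ w @ d | g d. g \<in> G \<and> d \<in> D} \<inter> F))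
                   - ((\<lambda>g. g @ w) ` G \<union> (\<lambda>d. w @ d) ` D))
       \<and> F_degree F ((X \<union> {w} \<union> ({g @ w @ d | g d. g \<in> G \<and> d \<in> D} \<inter> F))
                   - ((\<lambda>g. g @ w) ` G \<union> (\<lambda>d. w @ d) ` D)) = F_degree F X"
proof -
  note rec = assms(2) and finX = assms(3) and mx = assms(4) and wF = assms(5) and wne = assms(6)
  note Gne = assms(9) and Dne = assms(10) and disj0 = assms(11)
  define Y where "Y = (X \<union> {w} \<union> ({g @ w @ d | g d. g \<in> G \<and> d \<in> D} \<inter> F))
                   - ((\<lambda>g. g @ w) ` G \<union> (\<lambda>d. w @ d) ` D)"
  have bfX: "bifix_code X" and XF: "X \<subseteq> F" using mx by (auto simp: F_maximal_bifix_def)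
  have FA: "F \<subseteq> lists A" using rec by (simp add: recurrent_def)
  have pcX: "\<forall>x\<in>X. \<forall>y\<in>X. \<not> strict_prefix x y" using bifix_pc[OF bfX] .
  have scX: "\<forall>x\<in>X. \<forall>y\<in>X. \<not> strict_suffix x y" using bifix_sc[OF bfX] .
  have neX: "[] \<notin> X" using bifix_ne[OF bfX] .
  have XA: "x \<in> X \<Longrightarrow> x \<in> lists A" for x using XF FA by blast
  have G_iff: "g \<in> G \<longleftrightarrow> g \<in> lists A \<and> g @ w \<in> X" for g unfolding G_def by simp
  have D_iff: "d \<in> D \<longleftrightarrow> d \<in> lists A \<and> w @ d \<in> X" for d unfolding D_def by simp
  have GI: "g @ w \<in> X \<Longrightarrow> g \<in> G" for g using G_iff XA[of "g @ w"] by simp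
  have DI: "w @ d \<in> X \<Longrightarrow> d \<in> D" for d using D_iff XA[of "w @ d"] by simp
  have disj: "g \<in> G \<Longrightarrow> d \<in> D \<Longrightarrow> g @ w \<noteq> w @ d" for g d using disj0 by blast
  have wX: "w \<notin> X"
  proof
    assume "w \<in> X"
    then have "[] \<in> G" "[] \<in> D" using GI[of "[]"] DI[of "[]"] by auto
    with disj show False by fastforce
  qed
  have gne: "g \<in> G \<Longrightarrow> g \<noteq> []" for g using wX G_iff by auto
  have dne: "d \<in> D \<Longrightarrow> d \<noteq> []" for d using wX D_iff by auto
  obtain g0 where g0: "g0 \<in> G" using Gne by blast
  obtain d0 where d0: "d0 \<in> D" using Dne by blast
  have Y_iff: "y \<in> Y \<longleftrightarrow> (y \<in> X \<or> y = w \<or> (\<exists>g\<in>G. \<exists>d\<in>D. y = g @ w @ d) \<and> y \<in> F)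
      \<and> (\<forall>g\<in>G. y \<noteq> g @ w) \<and> (\<forall>d\<in>D. y \<noteq> w @ d)" for y
    unfolding Y_def by blast
  have TY: "g \<in> G \<Longrightarrow> d \<in> D \<Longrightarrow> g @ w @ d \<in> F \<Longrightarrow> g @ w @ d \<in> Y" for g d
  proof -
    assume g: "g \<in> G" and d: "d \<in> D" and t: "g @ w @ d \<in> F"
    have "g @ w @ d \<noteq> g' @ w" if g': "g' \<in> G" for g'
    proof
      assume e: "g @ w @ d = g' @ w"
      have "prefix (g @ w) (g' @ w)" unfolding e[symmetric] by simp
      moreover have "g @ w \<noteq> g' @ w" using e dne[OF d] by auto
      ultimately show False using pcX g g' G_iff by (auto simp: strict_prefix_def)
    qed
    moreover have "g @ w @ d \<noteq> w @ d'" if d': "d' \<in> D" for d'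
    proof
      assume e: "g @ w @ d = w @ d'"
      have "suffix (w @ d) (w @ d')" unfolding e[symmetric] by (simp add: suffix_def)
      moreover have "w @ d \<noteq> w @ d'" using e gne[OF g] by auto
      ultimately show False using scX d d' D_iff by (auto simp: strict_suffix_def)
    qed
    ultimately show ?thesis using g d t Y_iff by blast
  qed
  have wY: "w \<in> Y"
  proof -
    have "w \<noteq> g @ w" if "g \<in> G" for g using gne[OF that] by simp
    moreover have "w \<noteq> w @ d" if "d \<in> D" for d using dne[OF that] by simp
    ultimately show ?thesis using Y_iff by blast
  qed
  have YF: "Y \<subseteq> F" unfolding Y_def using XF wF by blast
  have finY: "finite Y"
  proof -
    have "inj_on (\<lambda>g. g @ w) G" by (auto intro: inj_onI)
    moreover have "(\<lambda>g. g @ w) ` G \<subseteq> X" using G_iff by auto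
    ultimately have fG: "finite G" using finX by (meson finite_imageD finite_subset)
    have "inj_on (\<lambda>d. w @ d) D" by (auto intro: inj_onI)
    moreover have "(\<lambda>d. w @ d) ` D \<subseteq> X" using D_iff by auto
    ultimately have fD: "finite D" using finX by (meson finite_imageD finite_subset)
    have "{g @ w @ d | g d. g \<in> G \<and> d \<in> D} = (\<lambda>(g,d). g @ w @ d) ` (G \<times> D)" by auto
    then have "finite {g @ w @ d | g d. g \<in> G \<and> d \<in> D}" using fG fD by simp
    then show ?thesis unfolding Y_def using finX by auto
  qed
  have Ycases: "y \<in> Y \<Longrightarrow> (y \<in> X \<and> (\<forall>g\<in>G. y \<noteq> g @ w) \<and> (\<forall>d\<in>D. y \<noteq> w @ d)) \<or> y = w
      \<or> (\<exists>g\<in>G. \<exists>d\<in>D. y = g @ w @ d)" for y using Y_iff by blast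
  have bfY: "bifix_code Y"
    unfolding bifix_code_def
  proof (intro conjI ballI impI)
    show "[] \<notin> Y" using Ycases neX wne by fastforce
  next
    fix x y assume x: "x \<in> Y" and y: "y \<in> Y" and sp: "strict_prefix x y"
    have pxy: "prefix x y" and xy: "x \<noteq> y" using sp by (auto simp: strict_prefix_def)
    have lxy: "length x < length y" using sp prefix_length_less by blast
    from Ycases[OF x] show False
    proof (elim disjE exE conjE bexE)
      assume xX: "x \<in> X" and xG: "\<forall>g\<in>G. x \<noteq> g @ w" and xD: "\<forall>d\<in>D. x \<noteq> w @ d"
      from Ycases[OF y] show False
      proof (elim disjE exE conjE bexE)
        assume "y \<in> X" then show False using pcX xX sp by blast
      next
        assume "y = w"
        then have "prefix x (w @ d0)" using pxy by (auto intro: prefix_order.trans)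
        then have "x = w @ d0" using pc_eq[OF pcX xX, of "w @ d0" "w @ d0"] d0 D_iff by auto
        then show False using xD d0 by blast
      next
        fix g d assume g: "g \<in> G" and d: "d \<in> D" and e: "y = g @ w @ d"
        have "prefix (g @ w) y" using e by simp
        then have "x = g @ w" using pc_eq[OF pcX xX, of "g @ w" y] g G_iff pxy by auto
        then show False using xG g by blast
      qed
    next
      assume xw: "x = w"
      from Ycases[OF y] show False
      proof (elim disjE exE conjE bexE)
        assume yX: "y \<in> X" and yD: "\<forall>d\<in>D. y \<noteq> w @ d"
        obtain d where "y = w @ d" using pxy xw by (auto simp: prefix_def)
        then show False using DI[of d] yX yD by blast
      next
        assume "y = w" then show False using xw xy by simp
      next
        fix g d assume g: "g \<in> G" and d: "d \<in> D" and e: "y = g @ w @ d"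
        have "prefix w (g @ w)"
          using prefix_length_prefix[of w y "g @ w"] pxy xw e by simp
        then obtain d' where d': "g @ w = w @ d'" by (auto simp: prefix_def)
        then have "d' \<in> D" using DI g G_iff by metis
        then show False using disj[OF g] d' by blast
      qed
    next
      fix g d assume g: "g \<in> G" and d: "d \<in> D" and e: "x = g @ w @ d"
      from Ycases[OF y] show False
      proof (elim disjE exE conjE bexE)
        assume yX: "y \<in> X" and yG: "\<forall>g\<in>G. y \<noteq> g @ w"
        have "prefix (g @ w) x" using e by simp
        then have "prefix (g @ w) y" using pxy by (rule prefix_order.trans)
        then have "g @ w = y" using pc_eq[OF pcX _ yX, of "g @ w" y] g G_iff by auto
        then show False using yG g by blast
      next
        assume "y = w" then show False using lxy e by simp
      next
        fix g' d' assume g': "g' \<in> G" and d': "d' \<in> D" and e': "y = g' @ w @ d'"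
        have "prefix (g @ w) x" using e by simp
        then have "prefix (g @ w) y" using pxy by (rule prefix_order.trans)
        moreover have "prefix (g' @ w) y" using e' by simp
        ultimately have "g @ w = g' @ w" using pc_eq[OF pcX] g g' G_iff by blast
        then have gg: "g = g'" by simp
        then have "prefix (w @ d) (w @ d')" using pxy e e' by simp
        then have "w @ d = w @ d'" using pc_eq[OF pcX, of "w @ d" "w @ d'" "w @ d'"] d d' D_iff by auto
        then show False using xy e e' gg by simp
      qed
    qed
  next
    fix x y assume x: "x \<in> Y" and y: "y \<in> Y" and sp: "strict_suffix x y"
    have pxy: "suffix x y" and xy: "x \<noteq> y" using sp by (auto simp: strict_suffix_def)
    have lxy: "length x < length y" using sp suffix_length_less by blast
    from Ycases[OF x] show False
    proof (elim disjE exE conjE bexE)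
      assume xX: "x \<in> X" and xG: "\<forall>g\<in>G. x \<noteq> g @ w" and xD: "\<forall>d\<in>D. x \<noteq> w @ d"
      from Ycases[OF y] show False
      proof (elim disjE exE conjE bexE)
        assume "y \<in> X" then show False using scX xX sp by blast
      next
        assume "y = w"
        then have "suffix x (g0 @ w)" using pxy by (auto intro: suffix_order.trans simp: suffix_def)
        then have "x = g0 @ w" using sc_eq[OF scX xX, of "g0 @ w" "g0 @ w"] g0 G_iff by auto
        then show False using xG g0 by blast
      next
        fix g d assume g: "g \<in> G" and d: "d \<in> D" and e: "y = g @ w @ d"
        have "suffix (w @ d) y" using e by (simp add: suffix_def)
        then have "x = w @ d" using sc_eq[OF scX xX, of "w @ d" y] d D_iff pxy by auto
        then show False using xD d by blast
      qed
    next
      assume xw: "x = w"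
      from Ycases[OF y] show False
      proof (elim disjE exE conjE bexE)
        assume yX: "y \<in> X" and yG: "\<forall>g\<in>G. y \<noteq> g @ w"
        obtain g where "y = g @ w" using pxy xw by (auto simp: suffix_def)
        then show False using GI[of g] yX yG by blast
      next
        assume "y = w" then show False using xw xy by simp
      next
        fix g d assume g: "g \<in> G" and d: "d \<in> D" and e: "y = g @ w @ d"
        have "suffix w (w @ d)"
          using suffix_length_suffix[of w y "w @ d"] pxy xw e by (simp add: suffix_def)
        then obtain g' where g': "w @ d = g' @ w" by (auto simp: suffix_def)
        then have "g' \<in> G" using GI d D_iff by metis
        then show False using disj[OF _ d] g' by metis
      qed
    next
      fix g d assume g: "g \<in> G" and d: "d \<in> D" and e: "x = g @ w @ d"
      from Ycases[OF y] show False
      proof (elim disjE exE conjE bexE)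
        assume yX: "y \<in> X" and yD: "\<forall>d\<in>D. y \<noteq> w @ d"
        have "suffix (w @ d) x" using e by (simp add: suffix_def)
        then have "suffix (w @ d) y" using pxy by (rule suffix_order.trans)
        then have "w @ d = y" using sc_eq[OF scX _ yX, of "w @ d" y] d D_iff by auto
        then show False using yD d by blast
      next
        assume "y = w" then show False using lxy e by simp
      next
        fix g' d' assume g': "g' \<in> G" and d': "d' \<in> D" and e': "y = g' @ w @ d'"
        have "suffix (w @ d) x" using e by (simp add: suffix_def)
        then have "suffix (w @ d) y" using pxy by (rule suffix_order.trans)
        moreover have "suffix (w @ d') y" using e' by (simp add: suffix_def)
        ultimately have "w @ d = w @ d'" using sc_eq[OF scX] d d' D_iff by blast
        then have dd: "d = d'" by simp
        then have "suffix (g @ w) (g' @ w)" using pxy e e' by (simp add: suffix_def)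
        then have "g @ w = g' @ w" using sc_eq[OF scX, of "g @ w" "g' @ w" "g' @ w"] g g' G_iff by auto
        then show False using xy e e' dd by simp
      qed
    qed
  qed
  have pcY: "\<forall>x\<in>Y. \<forall>y\<in>Y. \<not> strict_prefix x y" using bifix_pc[OF bfY] .
  have scY: "\<forall>x\<in>Y. \<forall>y\<in>Y. \<not> strict_suffix x y" using bifix_sc[OF bfY] .
  have neY: "[] \<notin> Y" using bifix_ne[OF bfY] .
  have leXY: "delta Y z \<le> delta X z" if z: "z \<in> F" for z
  proof -
    let ?A = "freeP Y z - freeP X z" and ?B = "freeP X z - freeP Y z"
    have ex: "\<exists>q. \<exists>d\<in>D. p = q @ d \<and> suffix w q" if p: "p \<in> ?A" for p
    proof -
      from p obtain x where x: "x \<in> X" "suffix x p" and pY: "\<forall>s. suffix s p \<longrightarrow> s \<notin> Y"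
        by (auto simp: freeP_def)
      have "x \<notin> Y" using x pY by blast
      then have "(\<exists>g\<in>G. x = g @ w) \<or> (\<exists>d\<in>D. x = w @ d)" using x(1) Y_iff by blast
      then show ?thesis
      proof
        assume "\<exists>g\<in>G. x = g @ w"
        then obtain g where "x = g @ w" by blast
        then have "suffix w p" using x(2) by (auto intro: suffix_order.trans simp: suffix_def)
        then show ?thesis using pY wY by blast
      next
        assume "\<exists>d\<in>D. x = w @ d"
        then obtain d where d: "d \<in> D" "x = w @ d" by blast
        then obtain p0 where "p = p0 @ w @ d" using x(2) by (auto simp: suffix_def)
        then show ?thesis using d by (intro exI[of _ "p0 @ w"] bexI[of _ d]) (auto simp: suffix_def)
      qed
    qed
    define f where "f p = (SOME q. \<exists>d\<in>D. p = q @ d \<and> suffix w q)" for p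
    have fP: "\<exists>d\<in>D. p = f p @ d \<and> suffix w (f p)" if "p \<in> ?A" for p
      unfolding f_def using someI_ex[OF ex[OF that]] .
    have fB: "f p \<in> ?B" if p: "p \<in> ?A" for p
    proof -
      obtain d where d: "d \<in> D" "p = f p @ d" "suffix w (f p)" using fP[OF p] by blast
      let ?q = "f p"
      have pz: "prefix p z" and pY: "\<forall>s. suffix s p \<longrightarrow> s \<notin> Y" using p by (auto simp: freeP_def)
      have qz: "prefix ?q z" using pz d(2) by (metis prefix_order.trans prefixI)
      have "?q \<notin> freeP Y z" using d(3) wY by (auto simp: freeP_def)
      moreover have "\<forall>s. suffix s ?q \<longrightarrow> s \<notin> X"
      proof (intro allI impI notI)
        fix s assume sq: "suffix s ?q" and sX: "s \<in> X"
        from suffix_same_cases[OF sq d(3)] show False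
        proof
          assume sw: "suffix s w"
          then have "suffix s (g0 @ w)" by (auto intro: suffix_order.trans simp: suffix_def)
          then have "s = g0 @ w" using sc_eq[OF scX sX, of "g0 @ w" "g0 @ w"] g0 G_iff by auto
          then show False using sw gne[OF g0] suffix_length_le[OF sw] by simp
        next
          assume "suffix w s"
          then obtain g where gs: "s = g @ w" by (auto simp: suffix_def)
          then have g: "g \<in> G" using GI sX by simp
          obtain q0 where q0: "?q = q0 @ s" using sq by (auto simp: suffix_def)
          obtain r where r: "z = p @ r" using pz by (auto simp: prefix_def)
          have "z = q0 @ (g @ w @ d) @ r" using r d(2) q0 gs by simp
          then have "g @ w @ d \<in> F" using recurrent_fc[OF rec z] by blast
          then have "g @ w @ d \<in> Y" using TY g d(1) by blast
          moreover have "suffix (g @ w @ d) p" using d(2) q0 gs by (simp add: suffix_def)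
          ultimately show False using pY by blast
        qed
      qed
      ultimately show ?thesis using qz by (auto simp: freeP_def)
    qed
    have inj: "inj_on f ?A"
    proof (rule inj_onI)
      fix p1 p2 assume p1: "p1 \<in> ?A" and p2: "p2 \<in> ?A" and e: "f p1 = f p2"
      obtain d1 where d1: "d1 \<in> D" "p1 = f p1 @ d1" using fP[OF p1] by blast
      obtain d2 where d2: "d2 \<in> D" "p2 = f p2 @ d2" using fP[OF p2] by blast
      have "prefix p1 z" "prefix p2 z" using p1 p2 by (auto simp: freeP_def)
      then have "prefix p1 p2 \<or> prefix p2 p1" using prefix_same_cases by blast
      moreover have "p1 = f p1 @ d1" "p2 = f p1 @ d2" using d1 d2 e by auto
      ultimately have "prefix (f p1 @ d1) (f p1 @ d2) \<or> prefix (f p1 @ d2) (f p1 @ d1)" by metis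
      then have "prefix d1 d2 \<or> prefix d2 d1" by simp
      then have "prefix (w @ d1) (w @ d2) \<or> prefix (w @ d2) (w @ d1)" by auto
      then have "w @ d1 = w @ d2" using pc_eq[OF pcX] d1 d2 D_iff by blast
      then show "p1 = p2" using d1 d2 e by simp
    qed
    have "card ?A \<le> card ?B"
      by (rule card_inj_on_le[OF inj]) (use fB finite_freeP in auto)
    then have "card (freeP Y z) \<le> card (freeP X z)"
      by (rule card_diff_le[OF finite_freeP finite_freeP])
    then show ?thesis using delta_pre[OF pcY neY] delta_pre[OF pcX neX] by simp
  qed
  obtain N where N: "\<forall>z\<in>F. delta X z \<le> N" using bounded_degree[OF rec finX mx] by blast
  have NY: "\<forall>z\<in>F. delta Y z \<le> N" using N leXY le_trans by blast
  have mxY: "F_maximal_bifix F Y" by (rule max_from_bounded[OF rec bfY YF NY])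
  have Fne: "F \<noteq> {}" using rec by (simp add: recurrent_def)
  obtain z0 where z0: "z0 \<in> F" "\<forall>z\<in>F. delta X z \<le> delta X z0" using max_delta[OF Fne N] by blast
  from rec z0(1) obtain t where WF: "z0 @ t @ z0 \<in> F" unfolding recurrent_def by blast
  define W where "W = z0 @ t @ z0"
  have WF': "W \<in> F" using WF W_def by simp
  have satR: "\<exists>s. suffix s p \<and> s \<in> X" if "prefix p W" "length p > length z0" for p
    using sat_right[OF bfX _ that[unfolded W_def]] z0(2) WF by simp
  have satL: "\<exists>q. prefix q s \<and> q \<in> X" if "suffix s W" "length s > length z0" for s
    using sat_left[OF bfX, of "z0 @ t" z0 s] z0(2) WF that unfolding W_def by simp
  have geW: "delta X W \<le> delta Y W"
  proof -
    let ?A = "freeP X W - freeP Y W" and ?B = "freeP Y W - freeP X W"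
    have wp: "suffix w p" if p: "p \<in> ?A" for p
    proof -
      from p obtain y where y: "y \<in> Y" "suffix y p" and pX: "\<forall>s. suffix s p \<longrightarrow> s \<notin> X"
        by (auto simp: freeP_def)
      from Ycases[OF y(1)] show ?thesis
      proof (elim disjE exE conjE bexE)
        assume "y \<in> X" then show ?thesis using y pX by blast
      next
        assume "y = w" then show ?thesis using y by simp
      next
        fix g d assume g: "g \<in> G" and d: "d \<in> D" and e: "y = g @ w @ d"
        have "suffix (w @ d) y" using e by (simp add: suffix_def)
        then have "suffix (w @ d) p" using y(2) by (rule suffix_order.trans)
        then show ?thesis using pX d D_iff by blast
      qed
    qed
    have ex: "\<exists>q. \<exists>d\<in>D. q = p @ d \<and> prefix q W" if p: "p \<in> ?A" for p
    proof -
      have pW: "prefix p W" and pX: "\<forall>s. suffix s p \<longrightarrow> s \<notin> X" using p by (auto simp: freeP_def)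
      have lp: "length p \<le> length z0" using satR[OF pW] pX by force
      obtain p0 where p0: "p = p0 @ w" using wp[OF p] by (auto simp: suffix_def)
      obtain r where r: "W = p @ r" using pW by (auto simp: prefix_def)
      have "suffix (w @ r) W" using r p0 by (simp add: suffix_def)
      moreover have "length (w @ r) > length z0"
      proof -
        have l1: "length W = length p0 + length (w @ r)" using r p0 by simp
        have l2: "length W = 2 * length z0 + length t" unfolding W_def by simp
        have lw: "length w > 0" using wne by simp
        have lpp: "length p = length p0 + length w" using p0 by simp
        have "length p0 < length z0" using lw lpp lp by linarith
        then show ?thesis using l1 l2 by simp
      qed
      ultimately obtain x where x: "prefix x (w @ r)" "x \<in> X" using satL by blast
      have "prefix w (w @ r)" by simp
      from prefix_same_cases[OF x(1) this] have "prefix w x"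
      proof
        assume "prefix x w"
        then have "prefix x (w @ d0)" by (auto intro: prefix_order.trans)
        then have "x = w @ d0" using pc_eq[OF pcX x(2), of "w @ d0" "w @ d0"] d0 D_iff by auto
        then show ?thesis by simp
      qed
      then obtain d where xd: "x = w @ d" by (auto simp: prefix_def)
      then have d: "d \<in> D" using DI x(2) by simp
      have "prefix (p @ d) W" using r p0 x(1) xd by simp
      then show ?thesis using d by blast
    qed
    define f where "f p = (SOME q. \<exists>d\<in>D. q = p @ d \<and> prefix q W)" for p
    have fP: "\<exists>d\<in>D. f p = p @ d \<and> prefix (f p) W" if "p \<in> ?A" for p
      unfolding f_def using someI_ex[OF ex[OF that]] .
    have fB: "f p \<in> ?B" if p: "p \<in> ?A" for p
    proof -
      obtain d where d: "d \<in> D" "f p = p @ d" "prefix (f p) W" using fP[OF p] by blast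
      have pX: "\<forall>s. suffix s p \<longrightarrow> s \<notin> X" using p by (auto simp: freeP_def)
      have wdq: "suffix (w @ d) (f p)" using d(2) wp[OF p] by (auto simp: suffix_def)
      have wdX: "w @ d \<in> X" using d D_iff by simp
      have "\<forall>s. suffix s (f p) \<longrightarrow> s \<notin> Y"
      proof (intro allI impI notI)
        fix y assume yq: "suffix y (f p)" and yY: "y \<in> Y"
        from Ycases[OF yY] show False
        proof (elim disjE exE conjE bexE)
          assume yX: "y \<in> X" and yD: "\<forall>d\<in>D. y \<noteq> w @ d"
          have "y = w @ d" using sc_eq[OF scX yX wdX yq wdq] .
          then show False using yD d by blast
        next
          assume yw: "y = w"
          from suffix_same_cases[OF wdq yq[unfolded yw]] show False
          proof
            assume "suffix (w @ d) w"
            then show False using suffix_length_le dne[OF d(1)] by fastforce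
          next
            assume "suffix w (w @ d)"
            then obtain g where g: "w @ d = g @ w" by (auto simp: suffix_def)
            then have "g \<in> G" using GI wdX by simp
            then have "g @ w \<noteq> w @ d" using disj d(1) by blast
            then show False using g by simp
          qed
        next
          fix g d' assume g: "g \<in> G" and d': "d' \<in> D" and e: "y = g @ w @ d'"
          have "suffix (w @ d') y" using e by (simp add: suffix_def)
          then have "suffix (w @ d') (f p)" using yq by (rule suffix_order.trans)
          then have "w @ d' = w @ d" using sc_eq[OF scX _ wdX _ wdq] d' D_iff by blast
          then have "d' = d" by simp
          then have "suffix ((g @ w) @ d) (p @ d)" using yq e d(2) by simp
          then have "suffix (g @ w) p" by (simp only: same_suffix_suffix)
          then show False using pX g G_iff by blast
        qed
      qed
      then show ?thesis using d(3) wdq wdX by (auto simp: freeP_def)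
    qed
    have inj: "inj_on f ?A"
    proof (rule inj_onI)
      fix p1 p2 assume p1: "p1 \<in> ?A" and p2: "p2 \<in> ?A" and e: "f p1 = f p2"
      obtain d1 where d1: "d1 \<in> D" "f p1 = p1 @ d1" using fP[OF p1] by blast
      obtain d2 where d2: "d2 \<in> D" "f p2 = p2 @ d2" using fP[OF p2] by blast
      have q2: "f p1 = p2 @ d2" using trans[OF e d2(2)] .
      obtain a1 where a1: "p1 = a1 @ w" using wp[OF p1] by (auto simp: suffix_def)
      obtain a2 where a2: "p2 = a2 @ w" using wp[OF p2] by (auto simp: suffix_def)
      have e1: "f p1 = a1 @ w @ d1" using d1(2) a1 by simp
      have e2: "f p1 = a2 @ w @ d2" using q2 a2 by simp
      have s1: "suffix (w @ d1) (f p1)" unfolding e1 by (simp add: suffix_def)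
      have s2: "suffix (w @ d2) (f p1)" unfolding e2 by (simp add: suffix_def)
      have m1: "w @ d1 \<in> X" and m2: "w @ d2 \<in> X" using d1(1) d2(1) D_iff by auto
      have "w @ d1 = w @ d2" by (rule sc_eq[OF scX m1 m2 s1 s2])
      then have dd: "d1 = d2" by simp
      have "p1 @ d1 = p2 @ d2" using trans[OF sym[OF d1(2)] q2] .
      then show "p1 = p2" using dd by simp
    qed
    have "card ?A \<le> card ?B"
      by (rule card_inj_on_le[OF inj]) (use fB finite_freeP in auto)
    then have "card (freeP X W) \<le> card (freeP Y W)"
      by (rule card_diff_le[OF finite_freeP finite_freeP])
    then show ?thesis using delta_pre[OF pcY neY] delta_pre[OF pcX neX] by simp
  qed
  have monoW: "delta X z0 \<le> delta X W"
  proof -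
    have "freeP X z0 \<subseteq> freeP X W" unfolding W_def by (auto simp: freeP_def prefix_def)
    then have "card (freeP X z0) \<le> card (freeP X W)" by (rule card_mono[OF finite_freeP])
    then show ?thesis using delta_pre[OF pcX neX] by simp
  qed
  have degX: "F_degree F X = enat (delta X z0)"
    unfolding F_degree_def
  proof (rule antisym)
    show "(SUP z\<in>F. enat (delta X z)) \<le> enat (delta X z0)"
      using z0(2) by (auto intro!: SUP_least)
    show "enat (delta X z0) \<le> (SUP z\<in>F. enat (delta X z))"
      using z0(1) by (rule SUP_upper)
  qed
  have degY: "F_degree F Y = enat (delta X z0)"
    unfolding F_degree_def
  proof (rule antisym)
    show "(SUP z\<in>F. enat (delta Y z)) \<le> enat (delta X z0)"
    proof (rule SUP_least)
      fix z assume zF: "z \<in> F"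
      have a1: "delta Y z \<le> delta X z" using leXY zF .
      have a2: "delta X z \<le> delta X z0" using z0(2) zF by blast
      have "delta Y z \<le> delta X z0" using a1 a2 by linarith
      then show "enat (delta Y z) \<le> enat (delta X z0)" by simp
    qed
    have "enat (delta Y W) \<le> (SUP z\<in>F. enat (delta Y z))"
      using WF' by (rule SUP_upper)
    moreover have "enat (delta X z0) \<le> enat (delta Y W)" using geW monoW by simp
    ultimately show "enat (delta X z0) \<le> (SUP z\<in>F. enat (delta Y z))"
      by (rule order_trans[rotated])
  qed
  have "finite Y \<and> F_maximal_bifix F Y \<and> F_degree F Y = F_degree F X"
    using finY mxY degX degY by (intro conjI) simp_all
  then show ?thesis unfolding Y_def .
qed

end
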